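(* Let $\mathcal{H}_n$ be an $n$-dimensional Hilbert space, let $F=\{f_i\}_{i=1}^N$ be a frame for $\mathcal{H}_n$ that admits a $1$-uniform dual, and let $p>1$. A dual frame $G=\{g_i\}_{i=1}^N$ of $F$ is a $1$-erasure spectrally optimal dual of $F$ (i.e. $G\in\zeta_{\mathfrak{R}}^{(1),p}(F)$) if and only if $G$ is a $1$-uniform dual of $F$.
   Context: $G=\{g_i\}$ is a dual of the frame $F$ if $f=\sum_i\langle f,f_i\rangle g_i$ for all $f\in\mathcal{H}_n$. A dual $G$ is $1$-uniform if $\langle f_i,g_i\rangle$ is the same constant for all $i$ (necessarily $n/N$). For a dual $G$, $\mathrm{AE}_{\mathfrak{R}}^{(1),p}(F,G)=\{\frac1N\sum_{i=1}^N\rho(E_i)^p\}^{1/p}=\{\frac1N\sum_{i=1}^N|\langle f_i,g_i\rangle|^p\}^{1/p}$, where $E_if=\langle f,f_i\rangle g_i$ is the one-erasure error operator and $\rho$ the spectral radius. $\zeta_{\mathfrak{R}}^{(1),p}(F)$ is the set of duals of $F$ minimizing $\mathrm{AE}_{\mathfrak{R}}^{(1),p}(F,\cdot)$ over all duals of $F$. *)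

theory Defs
  imports "HOL-Analysis.Analysis"
begin

text \<open>The n-dimensional Hilbert space H_n is modelled as complex^'n (n = CARD('n))
  with the standard inner product, linear in the first argument.\<close>

definition cinner :: "complex ^ 'n \<Rightarrow> complex ^ 'n \<Rightarrow> complex" where
  "cinner x y = (\<Sum>j\<in>UNIV. x $ j * cnj (y $ j))"

definition cnorm :: "complex ^ 'n \<Rightarrow> real" where
  "cnorm x = sqrt (Re (cinner x x))"

definition is_frame :: "nat \<Rightarrow> (nat \<Rightarrow> complex ^ 'n) \<Rightarrow> bool" where
  "is_frame N F \<longleftrightarrow> (\<exists>A B. 0 < A \<and> A \<le> B \<and>
     (\<forall>f. A * (cnorm f)\<^sup>2 \<le> (\<Sum>i<N. (cmod (cinner f (F i)))\<^sup>2) \<and>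
          (\<Sum>i<N. (cmod (cinner f (F i)))\<^sup>2) \<le> B * (cnorm f)\<^sup>2))"

definition is_dual :: "nat \<Rightarrow> (nat \<Rightarrow> complex ^ 'n) \<Rightarrow> (nat \<Rightarrow> complex ^ 'n) \<Rightarrow> bool" where
  "is_dual N F G \<longleftrightarrow> (\<forall>f. f = (\<Sum>i<N. cinner f (F i) *s G i))"

definition is_uniform_dual :: "nat \<Rightarrow> (nat \<Rightarrow> complex ^ 'n) \<Rightarrow> (nat \<Rightarrow> complex ^ 'n) \<Rightarrow> bool" where
  "is_uniform_dual N F G \<longleftrightarrow> is_dual N F G \<and> (\<exists>c. \<forall>i<N. cinner (F i) (G i) = c)"

definition AE1 :: "real \<Rightarrow> nat \<Rightarrow> (nat \<Rightarrow> complex ^ 'n) \<Rightarrow> (nat \<Rightarrow> complex ^ 'n) \<Rightarrow> real" where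
  "AE1 p N F G = ((1 / real N) * (\<Sum>i<N. cmod (cinner (F i) (G i)) powr p)) powr (1 / p)"

definition spectrally_optimal_dual :: "real \<Rightarrow> nat \<Rightarrow> (nat \<Rightarrow> complex ^ 'n) \<Rightarrow> (nat \<Rightarrow> complex ^ 'n) \<Rightarrow> bool" where
  "spectrally_optimal_dual p N F G \<longleftrightarrow> is_dual N F G \<and>
     (\<forall>G'. is_dual N F G' \<longrightarrow> AE1 p N F G \<le> AE1 p N F G')"

end

theory Submission
  imports Defs
begin

lemma tangent_t:
  fixes t p :: real
  assumes "0 \<le> t" "t \<noteq> 1" "p > 1"
  shows "t powr p > 1 + p * (t - 1)"
proof (cases "t = 0")
  case True then show ?thesis using assms by simp
next
  case False
  define f where "f = (\<lambda>x::real. x powr p - 1 - p * (x - 1))"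
  define f' where "f' = (\<lambda>x::real. p * x powr (p - 1) - p)"
  have D: "(f has_real_derivative f' x) (at x)" if "x > 0" for x
    unfolding f_def f'_def using that
    by (auto intro!: derivative_eq_intros)
  have "f t > 0"
  proof (cases "t < 1")
    case True
    with False assms have t0: "t > 0" by simp
    obtain z where z: "t < z" "z < 1" "f 1 - f t = (1 - t) * f' z"
      using MVT2[of t 1 f f'] True D t0 by force
    have "z powr (p - 1) < 1" using powr_less_mono2[of "p-1" z 1] z t0 assms by simp
    hence "f' z < 0" using assms unfolding f'_def by simp
    moreover have "f 1 = 0" unfolding f_def by simp
    moreover have "(1 - t) * f' z < 0" using True \<open>f' z < 0\<close> by (simp add: mult_pos_neg)
    ultimately show ?thesis using z by linarith
  next
    case False
    hence t1: "t > 1" using assms by simp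
    obtain z where z: "1 < z" "z < t" "f t - f 1 = (t - 1) * f' z"
      using MVT2[of 1 t f f'] t1 D by force
    have "z powr (p - 1) > 1" using powr_less_mono2[of "p-1" 1 z] z assms by simp
    hence "f' z > 0" using assms unfolding f'_def by simp
    moreover have "f 1 = 0" unfolding f_def by simp
    ultimately show ?thesis using z t1 by simp
  qed
  then show ?thesis unfolding f_def by simp
qed

lemma tangent_strict:
  fixes x a p :: real
  assumes "0 \<le> x" "0 < a" "x \<noteq> a" "p > 1"
  shows "x powr p > a powr p + p * a powr (p - 1) * (x - a)"
proof -
  define t where "t = x / a"
  have t0: "0 \<le> t" "t \<noteq> 1" using assms by (auto simp: t_def)
  have x: "x = a * t" using assms by (simp add: t_def)
  have "a powr p * (1 + p * (t - 1)) < a powr p * t powr p"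
    using tangent_t[OF t0 assms(4)] assms by simp
  also have "\<dots> = x powr p" using x assms t0 by (simp add: powr_mult)
  finally have *: "a powr p * (1 + p * (t - 1)) < x powr p" .
  have "a powr p = a * a powr (p - 1)" using assms by (simp add: powr_diff)
  hence "a powr p * (1 + p * (t - 1)) = a powr p + p * a powr (p - 1) * (x - a)"
    using x assms by (simp add: algebra_simps)
  with * show ?thesis by simp
qed

lemma tangent:
  fixes x a p :: real
  assumes "0 \<le> x" "0 < a" "p > 1"
  shows "x powr p \<ge> a powr p + p * a powr (p - 1) * (x - a)"
  using tangent_strict[of x a p] assms by (cases "x = a") auto

lemma sum_bound:
  fixes c :: "nat \<Rightarrow> complex" and s p :: real
  assumes N: "N > 0" and sum: "(\<Sum>i<N. c i) = of_real s" and s: "s > 0" and p: "p > 1"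
  shows "real N * (s / N) powr p \<le> (\<Sum>i<N. cmod (c i) powr p)"
    and "(\<Sum>i<N. cmod (c i) powr p) \<le> real N * (s / N) powr p \<Longrightarrow> (\<forall>i<N. c i = of_real (s / N))"
proof -
  define a where "a = s / N"
  have a: "a > 0" using N s by (simp add: a_def)
  define L where "L = (\<lambda>i. a powr p + p * a powr (p - 1) * (cmod (c i) - a))"
  have sumL: "(\<Sum>i<N. L i) = real N * a powr p + p * a powr (p - 1) * ((\<Sum>i<N. cmod (c i)) - s)"
  proof -
    have "(\<Sum>i<N. L i) = (\<Sum>i<N. a powr p) + (\<Sum>i<N. p * a powr (p - 1) * (cmod (c i) - a))"
      unfolding L_def by (rule sum.distrib)
    also have "(\<Sum>i<N. p * a powr (p - 1) * (cmod (c i) - a)) = p * a powr (p - 1) * (\<Sum>i<N. (cmod (c i) - a))"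
      by (simp add: sum_distrib_left)
    also have "(\<Sum>i<N. (cmod (c i) - a)) = (\<Sum>i<N. cmod (c i)) - s"
      using N by (simp add: sum_subtractf a_def)
    finally show ?thesis by simp
  qed
  have "s = cmod (\<Sum>i<N. c i)" using sum s by simp
  also have "\<dots> \<le> (\<Sum>i<N. cmod (c i))" by (rule norm_sum)
  finally have "s \<le> (\<Sum>i<N. cmod (c i))" .
  moreover have "p * a powr (p - 1) \<ge> 0" using p a by simp
  ultimately have L1: "real N * a powr p \<le> (\<Sum>i<N. L i)" unfolding sumL
    by (simp add: mult_nonneg_nonneg)
  have L2: "L i \<le> cmod (c i) powr p" for i
    unfolding L_def using tangent[of "cmod (c i)" a p] a p by simp
  have L3: "(\<Sum>i<N. L i) \<le> (\<Sum>i<N. cmod (c i) powr p)"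
    by (rule sum_mono) (use L2 in auto)
  show "real N * (s / N) powr p \<le> (\<Sum>i<N. cmod (c i) powr p)"
    using L1 L3 unfolding a_def by linarith
  assume H: "(\<Sum>i<N. cmod (c i) powr p) \<le> real N * (s / N) powr p"
  have mod: "cmod (c i) = a" if i: "i < N" for i
  proof (rule ccontr)
    assume ne: "cmod (c i) \<noteq> a"
    have "L i < cmod (c i) powr p"
      unfolding L_def using tangent_strict[of "cmod (c i)" a p] a p ne by simp
    hence "(\<Sum>i<N. L i) < (\<Sum>i<N. cmod (c i) powr p)"
      using sum_strict_mono_ex1[of "{..<N}" L "\<lambda>i. cmod (c i) powr p"] L2 i by auto
    with L1 H show False unfolding a_def by linarith
  qed
  have re_le: "Re (c i) \<le> a" if "i < N" for i
    using complex_Re_le_cmod[of "c i"] mod[OF that] by simp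
  have "(\<Sum>i<N. Re (c i)) = s" using sum by (metis Re_complex_of_real Re_sum)
  hence "(\<Sum>i<N. a - Re (c i)) = 0" using N by (simp add: sum_subtractf a_def)
  hence re: "Re (c i) = a" if "i < N" for i
    using sum_nonneg_eq_0_iff[of "{..<N}" "\<lambda>i. a - Re (c i)"] re_le that by auto
  show "\<forall>i<N. c i = of_real (s / N)"
  proof (intro allI impI)
    fix i assume i: "i < N"
    have "(cmod (c i))\<^sup>2 = (Re (c i))\<^sup>2 + (Im (c i))\<^sup>2" by (simp add: cmod_power2)
    hence "Im (c i) = 0" using mod[OF i] re[OF i] by simp
    thus "c i = of_real (s / N)" using re[OF i] by (simp add: complex_eq_iff a_def)
  qed
qed

lemma cinner_axis: "cinner (axis j 1) y = cnj (y $ j)"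
proof -
  have "cinner (axis j 1) y = (\<Sum>k\<in>UNIV. (if k = j then cnj (y $ k) else 0))"
    unfolding cinner_def axis_def by (intro sum.cong) auto
  thus ?thesis by simp
qed

lemma dual_N:
  assumes "is_dual N F (G :: nat \<Rightarrow> complex ^ 'n)" shows "N > 0"
proof (rule ccontr)
  assume "\<not> N > 0"
  hence "N = 0" by simp
  with assms have "(axis (undefined::'n) (1::complex)) = 0" unfolding is_dual_def by auto
  thus False by (metis axis_nth zero_index zero_neq_one)
qed

lemma dual_sum:
  assumes "is_dual N F (G :: nat \<Rightarrow> complex ^ 'n)"
  shows "(\<Sum>i<N. cinner (F i) (G i)) = of_nat CARD('n)"
proof -
  have one: "(\<Sum>i<N. cnj (F i $ j) * G i $ j) = 1" for j
  proof -
    have "axis j (1::complex) = (\<Sum>i<N. cinner (axis j 1) (F i) *s G i)"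
      using assms unfolding is_dual_def by blast
    hence "axis j (1::complex) $ j = (\<Sum>i<N. cinner (axis j 1) (F i) *s G i) $ j" by simp
    thus ?thesis by (simp add: cinner_axis)
  qed
  have "(\<Sum>i<N. cinner (G i) (F i)) = (\<Sum>j\<in>UNIV. \<Sum>i<N. cnj (F i $ j) * G i $ j)"
    unfolding cinner_def by (subst sum.swap) (simp add: mult.commute)
  also have "\<dots> = of_nat CARD('n)" using one by simp
  finally have "(\<Sum>i<N. cinner (G i) (F i)) = of_nat CARD('n)" .
  hence "cnj (\<Sum>i<N. cinner (G i) (F i)) = of_nat CARD('n)" by simp
  moreover have "cnj (cinner (G i) (F i)) = cinner (F i) (G i)" for i
    unfolding cinner_def by (simp add: mult.commute)
  ultimately show ?thesis by simp
qed

lemma powr_inv_le_iff: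
  fixes x y p :: real
  assumes "0 \<le> x" "0 \<le> y" "p > 0"
  shows "x powr (1/p) \<le> y powr (1/p) \<longleftrightarrow> x \<le> y"
  using powr_mono2[of "1/p" x y] powr_less_mono2[of "1/p" y x] assms by force

lemma uniform_S:
  assumes "is_uniform_dual N F (G :: nat \<Rightarrow> complex ^ 'n)"
  shows "(\<Sum>i<N. cmod (cinner (F i) (G i)) powr p) = real N * (real CARD('n) / N) powr p"
    and "\<forall>i<N. cinner (F i) (G i) = of_real (real CARD('n) / N)"
proof -
  have d: "is_dual N F G" using assms unfolding is_uniform_dual_def by blast
  obtain c where c: "\<forall>i<N. cinner (F i) (G i) = c" using assms unfolding is_uniform_dual_def by blast
  have N: "N > 0" by (rule dual_N[OF d])
  have "(\<Sum>i<N. cinner (F i) (G i)) = of_nat N * c" using c by simp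
  hence "of_nat N * c = of_nat CARD('n)" using dual_sum[OF d] by simp
  hence cv: "c = of_real (real CARD('n) / N)" using N
    by (simp add: field_simps)
  show all: "\<forall>i<N. cinner (F i) (G i) = of_real (real CARD('n) / N)" using c cv by simp
  have "(\<Sum>i<N. cmod (cinner (F i) (G i)) powr p) = (\<Sum>i<N. cmod (of_real (real CARD('n) / N)) powr p)"
    using all by simp
  also have "\<dots> = real N * (real CARD('n) / N) powr p"
    by (simp del: of_real_divide of_real_of_nat_eq)
  finally show "(\<Sum>i<N. cmod (cinner (F i) (G i)) powr p) = real N * (real CARD('n) / N) powr p" .
qed

theorem proposition5p1:
  fixes F G :: "nat \<Rightarrow> complex ^ 'n" and N :: nat and p :: real
  assumes "is_frame N F"
    and "\<exists>G0. is_uniform_dual N F G0"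
    and "p > 1"
    and "is_dual N F G"
  shows "spectrally_optimal_dual p N F G \<longleftrightarrow> is_uniform_dual N F G"
proof -
  define s where "s = real CARD('n)"
  have s: "s > 0" by (simp add: s_def)
  have N: "N > 0" by (rule dual_N[OF assms(4)])
  have p0: "p > 0" using assms(3) by simp
  define S where "S = (\<lambda>H. (\<Sum>i<N. cmod (cinner (F i) (H i)) powr p))"
  have S0: "S H \<ge> 0" for H unfolding S_def by (intro sum_nonneg) simp
  have AE: "AE1 p N F H = ((1 / real N) * S H) powr (1 / p)" for H
    unfolding AE1_def S_def by simp
  have AEle: "AE1 p N F H \<le> AE1 p N F H' \<longleftrightarrow> S H \<le> S H'" for H H'
    unfolding AE using powr_inv_le_iff[of "(1 / real N) * S H" "(1 / real N) * S H'" p] S0 N p0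
    by (simp add: divide_le_cancel)
  have dsum: "(\<Sum>i<N. cinner (F i) (H i)) = of_real s" if "is_dual N F H" for H
    using dual_sum[OF that] by (simp add: s_def)
  have lower: "real N * (s / N) powr p \<le> S H" if "is_dual N F H" for H
    unfolding S_def by (rule sum_bound(1)[OF N dsum[OF that] s assms(3)])
  obtain G0 where G0: "is_uniform_dual N F G0" using assms(2) by blast
  have SG0: "S G0 = real N * (s / N) powr p" unfolding S_def s_def by (rule uniform_S(1)[OF G0])
  show ?thesis
  proof
    assume opt: "spectrally_optimal_dual p N F G"
    have "is_dual N F G0" using G0 unfolding is_uniform_dual_def by blast
    hence "AE1 p N F G \<le> AE1 p N F G0" using opt unfolding spectrally_optimal_dual_def by blast
    hence "S G \<le> real N * (s / N) powr p" using AEle SG0 by simp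
    hence "\<forall>i<N. cinner (F i) (G i) = of_real (s / N)"
      unfolding S_def by (rule sum_bound(2)[OF N dsum[OF assms(4)] s assms(3)])
    thus "is_uniform_dual N F G" using assms(4) unfolding is_uniform_dual_def by blast
  next
    assume U: "is_uniform_dual N F G"
    have SG: "S G = real N * (s / N) powr p" unfolding S_def s_def by (rule uniform_S(1)[OF U])
    show "spectrally_optimal_dual p N F G"
      unfolding spectrally_optimal_dual_def
      using assms(4) AEle SG lower by simp
  qed
qed

end
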